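(* Let $\pi$ be an irreducible bounded $*$-representation of $\mathcal{A}(\Sigma^{2n+1}_q)$ on a Hilbert space $\mathcal{H}$ with $\pi(y_{n+1})\ne0$. Then: (i) $\pi(y_{n+1})$ is injective; (ii) there exists a vector $\xi\neq0$ in $\mathcal{H}$ such that $\pi(y_i)\xi=0$ for all $1\le i\le n$.
   Context: Let $0<q<1$, $n\ge1$. $\mathcal{A}(\Sigma^{2n+1}_q)$ is the quotient of the quantum sphere algebra $\mathcal{A}(S^{4n-1}_q)$ (the complex unital $*$-algebra generated by $x_1,\dots,x_n,y_1,\dots,y_n$ and adjoints subject to: $x_ix_j=q^{-1}x_jx_i$ ($i<j$); $y_iy_j=q^{-1}y_jy_i$ ($i>j$); $x_iy_j=q^{-1}y_jx_i$ ($i\ne j$); $y_ix_i=q^2x_iy_i+(q^2-1)\sum_{k=1}^{i-1}q^{i-k}x_ky_k$; $x_ix_i^*=x_i^*x_i+(1-q^2)\sum_{k=1}^{i-1}x_k^*x_k$; $y_iy_i^*=y_i^*y_i+(1-q^2)\{q^{2(n+1-i)}x_i^*x_i+\sum_{k=1}^n x_k^*x_k+\sum_{k=i+1}^n y_k^*y_k\}$; $x_iy_i^*=q^2y_i^*x_i$; $x_ix_j^*=qx_j^*x_i$ ($i\ne j$); $y_iy_j^*=qy_j^*y_i-(q^2-1)q^{2n+2-i-j}x_i^*x_j$ ($i\neq j$); $x_iy_j^*=qy_j^*x_i$ ($i<j$); $x_iy_j^*=qy_j^*x_i+(q^2-1)q^{i-j}y_i^*x_j$ ($i>j$); $\sum_{i=1}^n(x_i^*x_i+y_i^*y_i)=1$)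 by the two-sided $*$-ideal generated by $x_1,\dots,x_{n-1}$; in it $y_1,\dots,y_n$ denote the images of $y_1,\dots,y_n$ and $y_{n+1}$ the image of $x_n$. In this quotient $y_{n+1}$ is normal and (with adjoints): $y_iy_j=q^{-1}y_jy_i$, $y_i^*y_j=q^{-1}y_jy_i^*$ for $i>j$, $(i,j)\ne(n+1,n)$; $y_{n+1}y_n=q^{-2}y_ny_{n+1}$, $y_{n+1}^*y_n=q^{-2}y_ny_{n+1}^*$; $[y_i,y_i^*]=(1-q^2)\sum_{k=i+1}^{n+1}y_k^*y_k$ ($i\ne n$); $[y_n,y_n^*]=(1-q^4)y_{n+1}^*y_{n+1}$; $\sum_{i=1}^{n+1}y_i^*y_i=1$. *)

theory Defs
  imports "HOL-Analysis.Analysis"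
begin

text \<open>The inner product is conjugate-linear in the first and linear in the second argument.\<close>

definition cnorm :: "('h \<Rightarrow> 'h \<Rightarrow> complex) \<Rightarrow> 'h \<Rightarrow> real" where
  "cnorm cinner x = sqrt (Re (cinner x x))"

locale complex_hilbert =
  fixes scaleC :: "complex \<Rightarrow> 'h::ab_group_add \<Rightarrow> 'h"
    and cinner :: "'h \<Rightarrow> 'h \<Rightarrow> complex"
  assumes scaleC_add_right: "scaleC a (x + y) = scaleC a x + scaleC a y"
    and scaleC_add_left: "scaleC (a + b) x = scaleC a x + scaleC b x"
    and scaleC_scaleC: "scaleC a (scaleC b x) = scaleC (a * b) x"
    and scaleC_one: "scaleC 1 x = x"
    and cinner_cnj: "cinner x y = cnj (cinner y x)"
    and cinner_add_right: "cinner x (y + z) = cinner x y + cinner x z"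
    and cinner_scaleC_right: "cinner x (scaleC a y) = a * cinner x y"
    and cinner_nonneg: "0 \<le> Re (cinner x x)"
    and cinner_eq_zero: "cinner x x = 0 \<Longrightarrow> x = 0"
    and complete: "(\<forall>e>0. \<exists>N. \<forall>m\<ge>N. \<forall>k\<ge>N. cnorm cinner (s m - s k) < e)
                     \<Longrightarrow> \<exists>v. (\<lambda>k. cnorm cinner (s k - v)) \<longlonglongrightarrow> 0"

definition bounded_op ::
  "(complex \<Rightarrow> 'h::ab_group_add \<Rightarrow> 'h) \<Rightarrow> ('h \<Rightarrow> 'h \<Rightarrow> complex) \<Rightarrow> ('h \<Rightarrow> 'h) \<Rightarrow> bool" where
  "bounded_op scaleC cinner T \<longleftrightarrow>
     (\<forall>x y. T (x + y) = T x + T y) \<and> (\<forall>a x. T (scaleC a x) = scaleC a (T x)) \<and>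
     (\<exists>C. \<forall>x. cnorm cinner (T x) \<le> C * cnorm cinner x)"

definition is_adjoint :: "('h \<Rightarrow> 'h \<Rightarrow> complex) \<Rightarrow> ('h \<Rightarrow> 'h) \<Rightarrow> ('h \<Rightarrow> 'h) \<Rightarrow> bool" where
  "is_adjoint cinner T S \<longleftrightarrow> (\<forall>x y. cinner (T x) y = cinner x (S y))"

definition closed_subspace ::
  "(complex \<Rightarrow> 'h::ab_group_add \<Rightarrow> 'h) \<Rightarrow> ('h \<Rightarrow> 'h \<Rightarrow> complex) \<Rightarrow> 'h set \<Rightarrow> bool" where
  "closed_subspace scaleC cinner M \<longleftrightarrow>
     0 \<in> M \<and> (\<forall>x\<in>M. \<forall>y\<in>M. x + y \<in> M) \<and> (\<forall>a. \<forall>x\<in>M. scaleC a x \<in> M) \<and>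
     (\<forall>s v. (\<forall>k. s k \<in> M) \<and> (\<lambda>k. cnorm cinner (s k - v)) \<longlonglongrightarrow> 0 \<longrightarrow> v \<in> M)"

text \<open>A *-representation of the universal *-algebra A(S^{4n-1}_q) (generators
x_1..x_n, y_1..y_n) is the same as an assignment of bounded operators
X i = pi(x_i), Y i = pi(y_i) (i = 1..n) with adjoints Xs i = pi(x_i^*), Ys i = pi(y_i^*)
satisfying the defining relations (the adjoint relations then hold automatically).\<close>

definition sphere_rep ::
  "(complex \<Rightarrow> 'h::ab_group_add \<Rightarrow> 'h) \<Rightarrow> ('h \<Rightarrow> 'h \<Rightarrow> complex) \<Rightarrow> nat \<Rightarrow> real \<Rightarrow>
   (nat \<Rightarrow> 'h \<Rightarrow> 'h) \<Rightarrow> (nat \<Rightarrow> 'h \<Rightarrow> 'h) \<Rightarrow> (nat \<Rightarrow> 'h \<Rightarrow> 'h) \<Rightarrow> (nat \<Rightarrow> 'h \<Rightarrow> 'h) \<Rightarrow> bool" where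
  "sphere_rep scaleC cinner n q X Xs Y Ys \<longleftrightarrow>
   (let Q = complex_of_real q in
   (\<forall>i\<in>{1..n}. bounded_op scaleC cinner (X i) \<and> bounded_op scaleC cinner (Y i) \<and>
       is_adjoint cinner (X i) (Xs i) \<and> is_adjoint cinner (Y i) (Ys i)) \<and>
   (\<forall>i\<in>{1..n}. \<forall>j\<in>{1..n}. \<forall>v.
     (i < j \<longrightarrow> X i (X j v) = scaleC (inverse Q) (X j (X i v))) \<and>
     (i > j \<longrightarrow> Y i (Y j v) = scaleC (inverse Q) (Y j (Y i v))) \<and>
     (i \<noteq> j \<longrightarrow> X i (Y j v) = scaleC (inverse Q) (Y j (X i v))) \<and>
     (i \<noteq> j \<longrightarrow> X i (Xs j v) = scaleC Q (Xs j (X i v))) \<and>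
     (i \<noteq> j \<longrightarrow> Y i (Ys j v) = scaleC Q (Ys j (Y i v))
                    - scaleC ((Q^2 - 1) * Q ^ (2*n + 2 - i - j)) (Xs i (X j v))) \<and>
     (i < j \<longrightarrow> X i (Ys j v) = scaleC Q (Ys j (X i v))) \<and>
     (i > j \<longrightarrow> X i (Ys j v) = scaleC Q (Ys j (X i v))
                    + scaleC ((Q^2 - 1) * Q ^ (i - j)) (Ys i (X j v)))) \<and>
   (\<forall>i\<in>{1..n}. \<forall>v.
     Y i (X i v) = scaleC (Q^2) (X i (Y i v))
        + scaleC (Q^2 - 1) (\<Sum>k\<in>{1..<i}. scaleC (Q ^ (i - k)) (X k (Y k v))) \<and>
     X i (Xs i v) = Xs i (X i v) + scaleC (1 - Q^2) (\<Sum>k\<in>{1..<i}. Xs k (X k v)) \<and>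
     Y i (Ys i v) = Ys i (Y i v) + scaleC (1 - Q^2)
        (scaleC (Q ^ (2 * (n + 1 - i))) (Xs i (X i v))
         + (\<Sum>k\<in>{1..n}. Xs k (X k v)) + (\<Sum>k\<in>{i<..n}. Ys k (Y k v))) \<and>
     X i (Ys i v) = scaleC (Q^2) (Ys i (X i v))) \<and>
   (\<forall>v. (\<Sum>i\<in>{1..n}. Xs i (X i v) + Ys i (Y i v)) = v))"

text \<open>A representation of the quotient A(Sigma^{2n+1}_q) is a representation of
A(S^{4n-1}_q) vanishing on the *-ideal generated by x_1..x_{n-1}; then
pi(y_i) = Y i for i = 1..n and pi(y_{n+1}) = X n.\<close>

definition sigma_rep ::
  "(complex \<Rightarrow> 'h::ab_group_add \<Rightarrow> 'h) \<Rightarrow> ('h \<Rightarrow> 'h \<Rightarrow> complex) \<Rightarrow> nat \<Rightarrow> real \<Rightarrow>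
   (nat \<Rightarrow> 'h \<Rightarrow> 'h) \<Rightarrow> (nat \<Rightarrow> 'h \<Rightarrow> 'h) \<Rightarrow> (nat \<Rightarrow> 'h \<Rightarrow> 'h) \<Rightarrow> (nat \<Rightarrow> 'h \<Rightarrow> 'h) \<Rightarrow> bool" where
  "sigma_rep scaleC cinner n q X Xs Y Ys \<longleftrightarrow>
     sphere_rep scaleC cinner n q X Xs Y Ys \<and> (\<forall>i\<in>{1..<n}. \<forall>v. X i v = 0)"

text \<open>Irreducible: the only closed subspaces invariant under the image of the
algebra (equivalently, under all generators and their adjoints) are 0 and H.\<close>

definition irreducible_rep ::
  "(complex \<Rightarrow> 'h::ab_group_add \<Rightarrow> 'h) \<Rightarrow> ('h \<Rightarrow> 'h \<Rightarrow> complex) \<Rightarrow> nat \<Rightarrow>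
   (nat \<Rightarrow> 'h \<Rightarrow> 'h) \<Rightarrow> (nat \<Rightarrow> 'h \<Rightarrow> 'h) \<Rightarrow> (nat \<Rightarrow> 'h \<Rightarrow> 'h) \<Rightarrow> (nat \<Rightarrow> 'h \<Rightarrow> 'h) \<Rightarrow> bool" where
  "irreducible_rep scaleC cinner n X Xs Y Ys \<longleftrightarrow>
     (\<forall>M. closed_subspace scaleC cinner M \<and>
          (\<forall>i\<in>{1..n}. \<forall>v\<in>M. X i v \<in> M \<and> Xs i v \<in> M \<and> Y i v \<in> M \<and> Ys i v \<in> M)
          \<longrightarrow> M = {0} \<or> M = UNIV)"

end

theory Submission
  imports Defs
begin

context complex_hilbert begin

definition nn :: "'h \<Rightarrow> real" where "nn x = Re (cinner x x)"

lemma cnorm_nn: "cnorm cinner x = sqrt (nn x)"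
  by (simp add: cnorm_def nn_def)

lemma scaleC_zero[simp]: "scaleC a 0 = 0"
  using scaleC_add_right[of a 0 0] by simp

lemma scaleC_minus: "scaleC a (- x) = - scaleC a x"
  using scaleC_add_right[of a x "-x"] by (simp add: eq_neg_iff_add_eq_0 add.commute)

lemma scaleC_diff: "scaleC a (x - y) = scaleC a x - scaleC a y"
  using scaleC_add_right[of a x "-y"] scaleC_minus by simp

lemma cinner_zero_right[simp]: "cinner x 0 = 0"
  using cinner_add_right[of x 0 0] by simp

lemma cinner_minus_right: "cinner x (- y) = - cinner x y"
  using cinner_add_right[of x y "-y"] by (simp add: eq_neg_iff_add_eq_0 add.commute)

lemma cinner_diff_right: "cinner x (y - z) = cinner x y - cinner x z"
  using cinner_add_right[of x y "-z"] cinner_minus_right by simp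

lemma cinner_add_left: "cinner (x + y) z = cinner x z + cinner y z"
  by (metis cinner_add_right cinner_cnj complex_cnj_add)

lemma cinner_diff_left: "cinner (x - y) z = cinner x z - cinner y z"
  by (metis cinner_diff_right cinner_cnj complex_cnj_diff)

lemma cinner_zero_left[simp]: "cinner 0 x = 0"
  by (metis cinner_cnj cinner_zero_right complex_cnj_zero)

lemma cinner_scaleC_left: "cinner (scaleC a x) y = cnj a * cinner x y"
  by (metis cinner_cnj cinner_scaleC_right complex_cnj_mult)

lemma cinner_sum_right: "finite A \<Longrightarrow> cinner x (\<Sum>i\<in>A. f i) = (\<Sum>i\<in>A. cinner x (f i))"
  by (induction A rule: finite_induct) (auto simp: cinner_add_right)

lemma cinner_self_real: "cinner x x = complex_of_real (nn x)"
proof -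
  have "Im (cinner x x) = 0" using cinner_cnj[of x x]
    by (metis cnj.sel(2) equal_neg_zero)
  then show ?thesis by (simp add: nn_def complex_eq_iff)
qed

lemma nn_nonneg: "0 \<le> nn x" using cinner_nonneg by (simp add: nn_def)

lemma nn_zero[simp]: "nn 0 = 0" by (simp add: nn_def)

lemma nn_eq_0: "nn x = 0 \<longleftrightarrow> x = 0"
  using cinner_self_real[of x] cinner_eq_zero[of x] by auto

lemma nn_scale: "nn (scaleC a x) = (cmod a)^2 * nn x"
proof -
  have "cinner (scaleC a x) (scaleC a x) = (a * cnj a) * cinner x x"
    by (simp add: cinner_scaleC_left cinner_scaleC_right)
  also have "\<dots> = complex_of_real ((cmod a)^2 * nn x)"
    by (simp add: complex_norm_square[symmetric] cinner_self_real)
  finally show ?thesis by (simp add: nn_def)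
qed

lemma nn_diff: "nn (x - y) = nn x + nn y - 2 * Re (cinner x y)"
proof -
  have "cinner (x - y) (x - y) = cinner x x - cinner x y - cinner y x + cinner y y"
    by (simp add: cinner_diff_left cinner_diff_right)
  moreover have "Re (cinner y x) = Re (cinner x y)" by (subst cinner_cnj) simp
  ultimately show ?thesis by (simp add: nn_def)
qed

lemma nn_add: "nn (x + y) = nn x + nn y + 2 * Re (cinner x y)"
proof -
  have "cinner (x + y) (x + y) = cinner x x + cinner x y + cinner y x + cinner y y"
    by (simp add: cinner_add_left cinner_add_right)
  moreover have "Re (cinner y x) = Re (cinner x y)" by (subst cinner_cnj) simp
  ultimately show ?thesis by (simp add: nn_def)
qed

lemma nn_add_le: "nn (x + y) \<le> 2 * nn x + 2 * nn y"
proof -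
  have "nn (x + y) + nn (x - y) = 2 * nn x + 2 * nn y"
    using nn_add[of x y] nn_diff[of x y] by simp
  then show ?thesis using nn_nonneg[of "x - y"] by linarith
qed

lemma nn_minus: "nn (- x) = nn x"
  using nn_diff[of 0 x] by simp

lemma nn_commute: "nn (x - y) = nn (y - x)"
  by (metis minus_diff_eq nn_minus)

lemma adj_add: assumes "is_adjoint cinner A As" shows "As (x + y) = As x + As y"
proof -
  define d where "d = As (x + y) - As x - As y"
  have "cinner z d = 0" for z
    using assms unfolding d_def is_adjoint_def
    by (metis (no_types, lifting) cinner_add_right cinner_diff_right diff_self diff_diff_eq)
  then have "cinner d d = 0" by blast
  then have "d = 0" using cinner_eq_zero by blast
  then show ?thesis unfolding d_def by (simp add: algebra_simps)
qed

lemma adj_diff: assumes "is_adjoint cinner A As" shows "As (x - y) = As x - As y"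
  using adj_add[OF assms, of "x - y" y] by (simp add: eq_diff_eq)

lemma adj_zero: assumes "is_adjoint cinner A As" shows "As 0 = 0"
  using adj_diff[OF assms, of 0 0] by simp

lemma adj_of_zero: assumes "is_adjoint cinner A As" "\<And>v. A v = 0" shows "As y = 0"
proof -
  have "cinner (As y) (As y) = 0" using assms unfolding is_adjoint_def
    by (metis cinner_zero_left)
  then show ?thesis using cinner_eq_zero by blast
qed

lemma eq_by_cinner: assumes "\<And>z. cinner z a = cinner z b" shows "a = b"
proof -
  have "cinner (a - b) (a - b) = 0" using assms by (simp add: cinner_diff_right)
  then have "a - b = 0" using cinner_eq_zero by blast
  then show ?thesis by simp
qed

end

locale sig = complex_hilbert +
  fixes n :: nat and q :: real and X Xs Y Ys :: "nat \<Rightarrow> 'a \<Rightarrow> 'a"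
  assumes q0: "0 < q" and q1: "q < 1" and n1: "1 \<le> n"
    and rep: "sigma_rep scaleC cinner n q X Xs Y Ys"
    and nz: "X n \<noteq> (\<lambda>v. 0)"
begin

abbreviation "Q \<equiv> complex_of_real q"

lemma ops: "i \<in> {1..n} \<Longrightarrow> bounded_op scaleC cinner (X i) \<and> bounded_op scaleC cinner (Y i) \<and>
       is_adjoint cinner (X i) (Xs i) \<and> is_adjoint cinner (Y i) (Ys i)"
  using rep unfolding sigma_rep_def sphere_rep_def Let_def by blast

lemma pair: "i \<in> {1..n} \<Longrightarrow> j \<in> {1..n} \<Longrightarrow>
     (i < j \<longrightarrow> X i (X j v) = scaleC (inverse Q) (X j (X i v))) \<and>
     (i > j \<longrightarrow> Y i (Y j v) = scaleC (inverse Q) (Y j (Y i v))) \<and>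
     (i \<noteq> j \<longrightarrow> X i (Y j v) = scaleC (inverse Q) (Y j (X i v))) \<and>
     (i \<noteq> j \<longrightarrow> X i (Xs j v) = scaleC Q (Xs j (X i v))) \<and>
     (i \<noteq> j \<longrightarrow> Y i (Ys j v) = scaleC Q (Ys j (Y i v))
                    - scaleC ((Q^2 - 1) * Q ^ (2*n + 2 - i - j)) (Xs i (X j v))) \<and>
     (i < j \<longrightarrow> X i (Ys j v) = scaleC Q (Ys j (X i v))) \<and>
     (i > j \<longrightarrow> X i (Ys j v) = scaleC Q (Ys j (X i v))
                    + scaleC ((Q^2 - 1) * Q ^ (i - j)) (Ys i (X j v)))"
  using rep unfolding sigma_rep_def sphere_rep_def Let_def by blast

lemma diag: "i \<in> {1..n} \<Longrightarrow>
     Y i (X i v) = scaleC (Q^2) (X i (Y i v))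
        + scaleC (Q^2 - 1) (\<Sum>k\<in>{1..<i}. scaleC (Q ^ (i - k)) (X k (Y k v))) \<and>
     X i (Xs i v) = Xs i (X i v) + scaleC (1 - Q^2) (\<Sum>k\<in>{1..<i}. Xs k (X k v)) \<and>
     X i (Ys i v) = scaleC (Q^2) (Ys i (X i v))"
  using rep unfolding sigma_rep_def sphere_rep_def Let_def by blast

lemma sumrel: "(\<Sum>i\<in>{1..n}. Xs i (X i v) + Ys i (Y i v)) = v"
  using rep unfolding sigma_rep_def sphere_rep_def Let_def by blast

lemma Xz: "1 \<le> k \<Longrightarrow> k < n \<Longrightarrow> X k v = 0"
  using rep unfolding sigma_rep_def by auto

lemma nin: "n \<in> {1..n}" using n1 by simp

lemma adjZ: "is_adjoint cinner (X n) (Xs n)" using ops[OF nin] by blast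
lemma adjY: "j \<in> {1..n} \<Longrightarrow> is_adjoint cinner (Y j) (Ys j)" using ops by blast

lemma linop: assumes "bounded_op scaleC cinner T"
  shows "T (x + y) = T x + T y" "T (scaleC a x) = scaleC a (T x)" "T 0 = 0" "T (x - y) = T x - T y"
proof -
  have add: "\<And>x y. T (x + y) = T x + T y" using assms by (simp add: bounded_op_def)
  show "T (x + y) = T x + T y" by (rule add)
  show "T (scaleC a x) = scaleC a (T x)" using assms by (simp add: bounded_op_def)
  show z: "T 0 = 0" using add[of 0 0] by simp
  show "T (x - y) = T x - T y" using add[of "x - y" y] by (simp add: eq_diff_eq)
qed

lemma Zlin: "X n (x + y) = X n x + X n y" "X n (scaleC a x) = scaleC a (X n x)" "X n 0 = 0"
  "X n (x - y) = X n x - X n y"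
  using linop[of "X n"] ops[OF nin] by auto

lemma Ylin: "j \<in> {1..n} \<Longrightarrow> Y j (scaleC a x) = scaleC a (Y j x)"
  "j \<in> {1..n} \<Longrightarrow> Y j 0 = 0"
  using linop[of "Y j"] ops by auto

lemma Xsz: "1 \<le> k \<Longrightarrow> k < n \<Longrightarrow> Xs k v = 0"
  using adj_of_zero[of "X k" "Xs k"] ops[of k] Xz by auto

lemma Zs_diff: "Xs n (x - y) = Xs n x - Xs n y" using adj_diff[OF adjZ] .
lemma Zs_zero: "Xs n 0 = 0" using adj_zero[OF adjZ] .
lemma Ys_zero: "j \<in> {1..n} \<Longrightarrow> Ys j 0 = 0" using adj_zero[OF adjY] .

lemma normal: "X n (Xs n v) = Xs n (X n v)"
proof -
  have "(\<Sum>k\<in>{1..<n}. Xs k (X k v)) = 0" by (intro sum.neutral) (auto simp: Xsz)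
  then show ?thesis using diag[OF nin, of v] by simp
qed

lemma YnZ: "Y n (X n v) = scaleC (Q^2) (X n (Y n v))"
proof -
  have "(\<Sum>k\<in>{1..<n}. scaleC (Q ^ (n - k)) (X k (Y k v))) = 0" by (intro sum.neutral) (auto simp: Xz)
  then show ?thesis using diag[OF nin, of v] by simp
qed

lemma YjZ: assumes "1 \<le> j" "j < n" shows "Y j (X n v) = scaleC Q (X n (Y j v))"
proof -
  have "X n (Y j v) = scaleC (inverse Q) (Y j (X n v))" using pair[OF nin, of j v] assms by auto
  then have "scaleC Q (X n (Y j v)) = scaleC (Q * inverse Q) (Y j (X n v))" by (simp add: scaleC_scaleC)
  also have "Q * inverse Q = 1" using q0 by simp
  finally show ?thesis by (simp add: scaleC_one)
qed

lemma ker_Y: assumes "j \<in> {1..n}" "X n v = 0" shows "X n (Y j v) = 0"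
proof (cases "j = n")
  case True
  have "scaleC (Q^2) (X n (Y n v)) = 0" using YnZ[of v] assms Ylin[OF nin] by simp
  then have "scaleC (inverse (Q^2)) (scaleC (Q^2) (X n (Y n v))) = 0" by simp
  then show ?thesis using q0 True by (simp add: scaleC_scaleC scaleC_one)
next
  case False
  then show ?thesis using pair[OF nin assms(1), of v] assms Ylin[OF assms(1)] by auto
qed

lemma ker_Ys: assumes "j \<in> {1..n}" "X n v = 0" shows "X n (Ys j v) = 0"
proof (cases "j = n")
  case True
  then show ?thesis using diag[OF nin, of v] assms Ys_zero[OF nin] by simp
next
  case False
  then have "X n (Ys j v) = scaleC Q (Ys j (X n v)) + scaleC ((Q^2 - 1) * Q ^ (n - j)) (Ys n (X j v))"
    using pair[OF nin assms(1), of v] assms by auto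
  then show ?thesis using assms False Ys_zero[OF assms(1)] Ys_zero[OF nin] Xz[of j v] by auto
qed

lemma ker_Xs: assumes "i \<in> {1..n}" "X n v = 0" shows "X n (Xs i v) = 0"
proof (cases "i = n")
  case True
  then show ?thesis using normal[of v] assms Zs_zero by simp
next
  case False
  then show ?thesis using assms Xsz[of i v] Zlin by auto
qed

lemma ker_X: assumes "i \<in> {1..n}" "X n v = 0" shows "X n (X i v) = 0"
  using assms Xz[of i v] Zlin by (cases "i = n") auto

lemma adj_self: "is_adjoint cinner A As \<Longrightarrow> cinner v (As (A v)) = cinner (A v) (A v)"
  unfolding is_adjoint_def by simp

definition SS :: "'a \<Rightarrow> real" where "SS v = (\<Sum>j\<in>{1..n}. nn (Y j v))"

lemma SS_nonneg: "0 \<le> SS v" unfolding SS_def by (simp add: sum_nonneg nn_nonneg)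

lemma star: "nn (X n v) + SS v = nn v"
proof -
  have "cinner v v = (\<Sum>i\<in>{1..n}. cinner v (Xs i (X i v)) + cinner v (Ys i (Y i v)))"
    using sumrel[of v] by (metis (no_types, lifting) cinner_add_right cinner_sum_right finite_atLeastAtMost sum.cong)
  also have "\<dots> = (\<Sum>i\<in>{1..n}. complex_of_real (nn (X i v) + nn (Y i v)))"
    by (intro sum.cong refl) (simp add: adj_self ops cinner_self_real)
  finally have "nn v = (\<Sum>i\<in>{1..n}. nn (X i v)) + SS v"
    by (simp add: nn_def sum.distrib SS_def)
  moreover have "(\<Sum>i\<in>{1..n}. nn (X i v)) = nn (X n v)"
  proof -
    have "{1..n} = insert n {1..<n}" using n1 by auto
    moreover have "(\<Sum>i\<in>{1..<n}. nn (X i v)) = 0" by (intro sum.neutral) (auto simp: Xz)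
    ultimately show ?thesis by simp
  qed
  ultimately show ?thesis by simp
qed

lemma Z_le: "nn (X n v) \<le> nn v" using star[of v] SS_nonneg[of v] by linarith

lemma Zs_nn: "nn (Xs n y) = nn (X n y)"
proof -
  have "cinner (Xs n y) (Xs n y) = cinner (X n (Xs n y)) y" using adjZ unfolding is_adjoint_def by simp
  also have "\<dots> = cinner (Xs n (X n y)) y" by (simp add: normal)
  also have "\<dots> = cnj (cinner y (Xs n (X n y)))" by (rule cinner_cnj)
  also have "\<dots> = cnj (cinner (X n y) (X n y))" by (simp add: adj_self[OF adjZ])
  finally show ?thesis by (simp add: nn_def)
qed

lemma cmodQ: "cmod Q = q" using q0 by simp

lemma K: assumes "0 \<le> M" "\<And>x. nn (X n x) \<le> M * nn x"
  shows "SS (X n v) \<le> q^2 * M * SS v"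
proof -
  have "nn (Y j (X n v)) \<le> q^2 * M * nn (Y j v)" if j: "j \<in> {1..n}" for j
  proof (cases "j = n")
    case True
    have "nn (Y j (X n v)) = q^4 * nn (X n (Y j v))" using YnZ[of v] True
      by (simp add: nn_scale norm_power cmodQ)
    also have "\<dots> \<le> q^4 * (M * nn (Y j v))" using assms(2) q0 by (intro mult_left_mono) auto
    also have "\<dots> \<le> q^2 * M * nn (Y j v)"
    proof -
      have "q^4 \<le> q^2" using q0 q1 by (simp add: power_decreasing)
      moreover have "0 \<le> M * nn (Y j v)" using assms(1) nn_nonneg by simp
      ultimately show ?thesis by (metis mult.assoc mult_right_mono)
    qed
    finally show ?thesis .
  next
    case False
    then have "nn (Y j (X n v)) = q^2 * nn (X n (Y j v))" using YjZ[of j v] j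
      by (simp add: nn_scale cmodQ)
    also have "\<dots> \<le> q^2 * (M * nn (Y j v))" using assms(2) by (intro mult_left_mono) auto
    finally show ?thesis by simp
  qed
  then show ?thesis unfolding SS_def sum_distrib_left by (intro sum_mono) blast
qed

lemma Znz: "\<exists>x. X n x \<noteq> 0" using nz by auto

lemma exists_good: "\<exists>v. q^2 * nn v < nn (X n v)"
proof (rule ccontr)
  assume "\<not> ?thesis"
  then have h0: "\<And>x. nn (X n x) \<le> q^2 * nn x" by (simp add: not_less)
  define d where "d = 1 - q^2 + q^4"
  define r where "r = q^2 / d"
  have qq: "0 < q^2" "q^2 < 1" using q0 q1 by (auto simp: power_less_one_iff)
  have d0: "0 < d" using qq unfolding d_def
    using zero_le_power[of q 4] q0 by linarith
  have dq: "q^2 < d" unfolding d_def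
  proof -
    have "0 < (1 - q^2)^2" using qq by simp
    then show "q^2 < 1 - q^2 + q^4" by (simp add: power2_eq_square power4_eq_xxxx algebra_simps)
  qed
  have r00: "0 \<le> r" unfolding r_def
    using d0 qq by simp
  have r01: "r < 1" unfolding r_def
    using pos_divide_less_eq[OF d0, of "q^2" 1] dq by simp
  note r0 = r00 r01
  have ind: "\<forall>x. nn (X n x) \<le> q^2 * r^k * nn x" for k
  proof (induction k)
    case 0
    then show ?case using h0 by simp
  next
    case (Suc k)
    define M where "M = q^2 * r^k"
    have M0: "0 \<le> M" "M \<le> q^2" using r0 qq unfolding M_def
      by (auto simp: power_le_one mult_left_le)
    show ?case
    proof
      fix x
      define a0 a1 a2 where "a0 = nn x" "a1 = nn (X n x)" "a2 = nn (X n (X n x))"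
      have e1: "a1 + SS x = a0" using star[of x] a0_a1_a2_def by simp
      have e2: "a2 + SS (X n x) = a1" using star[of "X n x"] a0_a1_a2_def by simp
      have kk: "SS (X n x) \<le> q^2 * M * SS x" using K[of M x] M0 Suc M_def by simp
      have a2: "a2 \<le> M * a1" using Suc M_def a0_a1_a2_def by simp
      have a1: "0 \<le> a1" using nn_nonneg a0_a1_a2_def by simp
      have sx: "SS x = a0 - a1" using e1 by simp
      have "q^2 * M * SS x = q^2 * M * a0 - q^2 * M * a1" unfolding sx by (simp add: algebra_simps)
      then have s1: "a1 * (1 - M + q^2 * M) \<le> q^2 * M * a0"
        using e2 kk a2 by (simp add: algebra_simps)
      have "a1 * d \<le> a1 * (1 - M + q^2 * M)"
      proof (rule mult_left_mono[OF _ a1])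
        have "M * (1 - q^2) \<le> q^2 * (1 - q^2)" using M0 qq by (intro mult_right_mono) auto
        then show "d \<le> 1 - M + q^2 * M" unfolding d_def by (simp add: algebra_simps power2_eq_square power4_eq_xxxx)
      qed
      then have "a1 * d \<le> q^2 * M * a0" using s1 by linarith
      then have "a1 \<le> q^2 * M * a0 / d" using d0 by (simp add: field_simps)
      also have "q^2 * M * a0 / d = q^2 * r^(Suc k) * a0" unfolding M_def r_def by (simp add: field_simps)
      finally show "nn (X n x) \<le> q^2 * r^(Suc k) * nn x" using a0_a1_a2_def by simp
    qed
  qed
  have "X n x = 0" for x
  proof -
    have "(\<lambda>k. q^2 * r^k * nn x) \<longlonglongrightarrow> q^2 * 0 * nn x"
      by (intro tendsto_intros LIMSEQ_power_zero) (use r0 in auto)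
    then have "nn (X n x) \<le> 0" using ind by (intro LIMSEQ_le_const[of _ 0]) auto
    then show ?thesis using nn_nonneg[of "X n x"] nn_eq_0 by (simp add: order_antisym)
  qed
  then show False using Znz by blast
qed

lemma Z_Zspow: "X n ((Xs n ^^ m) y) = (Xs n ^^ m) (X n y)"
  by (induction m arbitrary: y) (simp_all add: normal)

lemma adj_pow: "cinner ((X n ^^ m) x) y = cinner x ((Xs n ^^ m) y)"
proof (induction m arbitrary: y)
  case 0 then show ?case by simp
next
  case (Suc m)
  have "cinner ((X n ^^ Suc m) x) y = cinner ((X n ^^ m) x) (Xs n y)"
    using adjZ unfolding is_adjoint_def by simp
  also have "\<dots> = cinner x ((Xs n ^^ m) (Xs n y))" by (rule Suc)
  finally show ?case by (simp add: funpow_swap1)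
qed

definition TT :: "'a \<Rightarrow> 'a" where "TT x = Xs n (X n x)"

lemma TT_pow: "(TT ^^ m) x = (Xs n ^^ m) ((X n ^^ m) x)"
proof (induction m arbitrary: x)
  case 0 then show ?case by simp
next
  case (Suc m)
  have "(TT ^^ Suc m) x = (TT ^^ m) (TT x)" by (simp add: funpow_swap1)
  also have "\<dots> = (Xs n ^^ m) ((X n ^^ m) (Xs n (X n x)))" by (simp add: Suc TT_def)
  also have "(X n ^^ m) (Xs n (X n x)) = Xs n ((X n ^^ m) (X n x))"
  proof -
    have "\<And>y. (X n ^^ m) (Xs n y) = Xs n ((X n ^^ m) y)"
      by (induction m) (simp_all add: normal)
    then show ?thesis by simp
  qed
  finally show ?case by (simp add: funpow_swap1)
qed

lemma TT_sa: "cinner (TT x) y = cinner x (TT y)"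
proof -
  have "cinner (TT x) y = cnj (cinner y (Xs n (X n x)))" by (simp add: TT_def cinner_cnj[of _ y])
  also have "\<dots> = cnj (cinner (X n y) (X n x))" using adjZ unfolding is_adjoint_def by simp
  also have "\<dots> = cinner (X n x) (X n y)" by (simp add: cinner_cnj[of "X n x"])
  also have "\<dots> = cinner x (TT y)" using adjZ unfolding is_adjoint_def TT_def by simp
  finally show ?thesis .
qed

lemma TT_pow_sa: "cinner ((TT ^^ m) x) y = cinner x ((TT ^^ m) y)"
proof (induction m arbitrary: y)
  case 0 then show ?case by simp
next
  case (Suc m)
  have "cinner ((TT ^^ Suc m) x) y = cinner ((TT ^^ m) x) (TT y)" by (simp add: TT_sa)
  also have "\<dots> = cinner x ((TT ^^ m) (TT y))" by (rule Suc)
  finally show ?case by (simp add: funpow_swap1)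
qed

lemma TT_nn: "nn (TT x) \<le> nn x"
  using Zs_nn[of "X n x"] Z_le[of "X n x"] Z_le[of x] unfolding TT_def by linarith

lemma TT_diff: "TT (x - y) = TT x - TT y"
  unfolding TT_def by (simp add: Zlin Zs_diff)

lemma main_exists: "\<exists>\<xi>. \<xi> \<noteq> 0 \<and> (\<forall>i\<in>{1..n}. Y i \<xi> = 0)"
proof -
  obtain v where v: "q^2 * nn v < nn (X n v)" using exists_good by blast
  define a where "a m = nn ((X n ^^ m) v)" for m
  define s where "s m = (TT ^^ m) v" for m
  define c where "c = nn v - SS v / (1 - q^2)"
  have qq: "0 < q^2" "q^2 < 1" using q0 q1 by (auto simp: power_less_one_iff)
  have c0: "0 < c"
  proof -
    have "SS v = nn v - nn (X n v)" using star[of v] by simp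
    then have "SS v < (1 - q^2) * nn v" using v by (simp add: algebra_simps)
    then have "SS v / (1 - q^2) < nn v" using qq by (simp add: pos_divide_less_eq mult.commute)
    then show ?thesis unfolding c_def by simp
  qed
  have SSpow: "SS ((X n ^^ m) v) \<le> (q^2)^m * SS v" for m
  proof (induction m)
    case 0 then show ?case by simp
  next
    case (Suc m)
    have "SS ((X n ^^ Suc m) v) \<le> q^2 * 1 * SS ((X n ^^ m) v)"
      using K[of 1 "(X n ^^ m) v"] Z_le by simp
    also have "\<dots> \<le> q^2 * ((q^2)^m * SS v)" using Suc qq by simp
    finally show ?case by simp
  qed
  have astep: "a m - a (Suc m) \<le> (q^2)^m * SS v" for m
    using star[of "(X n ^^ m) v"] SSpow[of m] unfolding a_def by simp
  have alow': "c + SS v * (q^2)^m / (1 - q^2) \<le> a m" for m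
  proof (induction m)
    case 0 then show ?case unfolding a_def c_def by simp
  next
    case (Suc m)
    have "c + SS v * (q^2)^(Suc m) / (1 - q^2) = c + SS v * (q^2)^m / (1 - q^2) - (q^2)^m * SS v"
      using qq by (simp add: field_simps)
    also have "\<dots> \<le> a m - (q^2)^m * SS v" using Suc by simp
    also have "\<dots> \<le> a (Suc m)" using astep[of m] by simp
    finally show ?case .
  qed
  have alow: "c \<le> a m" for m
  proof -
    have "0 \<le> SS v * (q^2)^m / (1 - q^2)" using qq SS_nonneg by simp
    then show ?thesis using alow'[of m] by linarith
  qed
  have adec: "decseq a" unfolding decseq_Suc_iff a_def using Z_le by simp
  have apos: "\<forall>i. 0 \<le> a i" unfolding a_def using nn_nonneg by simp
  obtain L where aL: "a \<longlonglongrightarrow> L" and La: "\<forall>i. L \<le> a i"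
    using decseq_convergent[OF adec apos] by blast
  have inner: "Re (cinner (s m) (s k)) = a (m + k)" for m k
  proof -
    have "cinner (s m) (s k) = cinner v ((TT ^^ (m + k)) v)"
      unfolding s_def TT_pow_sa by (simp add: funpow_add)
    also have "\<dots> = cinner ((X n ^^ (m + k)) v) ((X n ^^ (m + k)) v)"
      by (simp add: TT_pow adj_pow)
    finally show ?thesis by (simp add: a_def nn_def)
  qed
  have nsm: "nn (s m) = a (2*m)" for m
  proof -
    have "nn (s m) = Re (cinner (s m) (s m))" by (simp add: nn_def)
    also have "\<dots> = a (m + m)" by (rule inner)
    finally show ?thesis by (simp add: mult_2)
  qed
  have nns: "nn (s m - s k) = a (2*m) + a (2*k) - 2 * a (m + k)" for m k
    using nn_diff[of "s m" "s k"] nsm[of m] nsm[of k] inner[of m k] by linarith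
  have cauchy: "\<forall>e>0. \<exists>N. \<forall>m\<ge>N. \<forall>k\<ge>N. cnorm cinner (s m - s k) < e"
  proof (intro allI impI)
    fix e :: real assume e: "0 < e"
    then have "0 < e^2 / 2" by simp
    then obtain N where N: "\<And>i. i \<ge> N \<Longrightarrow> \<bar>a i - L\<bar> < e^2 / 2"
      using aL unfolding LIMSEQ_iff by (metis real_norm_def)
    have "cnorm cinner (s m - s k) < e" if "m \<ge> N" "k \<ge> N" for m k
    proof -
      have h: "\<bar>a (2*m) - L\<bar> < e^2/2" "\<bar>a (2*k) - L\<bar> < e^2/2" using N[of "2*m"] N[of "2*k"] that by auto
      have "a (2*m) < L + e^2/2" "a (2*k) < L + e^2/2" using h[unfolded abs_less_iff] by linarith+
      then have "nn (s m - s k) < e^2" using nns[of m k] La[rule_format, of "m + k"] by linarith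
      then have "sqrt (nn (s m - s k)) < sqrt (e^2)" by (simp only: real_sqrt_less_iff)
      then show ?thesis using e by (simp add: cnorm_nn)
    qed
    then show "\<exists>N. \<forall>m\<ge>N. \<forall>k\<ge>N. cnorm cinner (s m - s k) < e" by blast
  qed
  obtain w where w: "(\<lambda>k. cnorm cinner (s k - w)) \<longlonglongrightarrow> 0"
    using complete[OF cauchy] by blast
  have conv: "(\<lambda>k. nn (s k - w)) \<longlonglongrightarrow> 0"
  proof -
    have "(\<lambda>k. (cnorm cinner (s k - w))^2) \<longlonglongrightarrow> 0^2" by (intro tendsto_intros w)
    moreover have "(cnorm cinner (s k - w))^2 = nn (s k - w)" for k
      by (simp add: cnorm_nn nn_nonneg)
    ultimately show ?thesis by simp
  qed
  have wnz: "w \<noteq> 0"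
  proof
    assume "w = 0"
    then have "(\<lambda>k. nn (s k)) \<longlonglongrightarrow> 0" using conv by simp
    moreover note nsm
    ultimately have "c \<le> 0" using alow by (intro LIMSEQ_le_const[of "\<lambda>k. nn (s k)"]) auto
    then show False using c0 by simp
  qed
  have Tw: "TT w = w"
  proof -
    have bound: "nn (TT w - w) \<le> 2 * nn (s m - w) + 2 * nn (s (Suc m) - w)" for m
    proof -
      have "nn (TT w - w) = nn ((TT w - TT (s m)) + (TT (s m) - w))" by simp
      also have "\<dots> \<le> 2 * nn (TT w - TT (s m)) + 2 * nn (TT (s m) - w)" by (rule nn_add_le)
      also have "nn (TT w - TT (s m)) \<le> nn (s m - w)"
        using TT_nn[of "w - s m"] by (simp add: TT_diff nn_commute[of w])
      also have "TT (s m) = s (Suc m)" unfolding s_def by (simp add: funpow_swap1)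
      finally show ?thesis by simp
    qed
    have "(\<lambda>m. 2 * nn (s m - w) + 2 * nn (s (Suc m) - w)) \<longlonglongrightarrow> 2 * 0 + 2 * 0"
      by (intro tendsto_intros conv LIMSEQ_Suc[OF conv])
    then have "nn (TT w - w) \<le> 2 * 0 + 2 * 0"
      by (rule LIMSEQ_le_const) (use bound in blast)
    then have "nn (TT w - w) = 0" using nn_nonneg[of "TT w - w"] by simp
    then show ?thesis using nn_eq_0 by simp
  qed
  have "nn (X n w) = nn w"
  proof -
    have "cinner (X n w) (X n w) = cinner w (TT w)"
      unfolding TT_def using adj_self[OF adjZ, of w] by simp
    then show ?thesis using Tw by (simp add: nn_def)
  qed
  then have "SS w = 0" using star[of w] by simp
  then have "\<forall>j\<in>{1..n}. nn (Y j w) = 0"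
    unfolding SS_def using sum_nonneg_eq_0_iff[of "{1..n}" "\<lambda>j. nn (Y j w)"] nn_nonneg by auto
  then have "\<forall>j\<in>{1..n}. Y j w = 0" using nn_eq_0 by blast
  then show ?thesis using wnz by blast
qed

lemma main_inj:
  assumes irr: "irreducible_rep scaleC cinner n X Xs Y Ys"
  shows "inj (X n)"
proof -
  define M where "M = {v. X n v = 0}"
  have cs: "closed_subspace scaleC cinner M"
    unfolding closed_subspace_def
  proof (intro conjI allI ballI impI)
    show "0 \<in> M" unfolding M_def by (simp add: Zlin)
  next
    fix x y assume "x \<in> M" "y \<in> M" then show "x + y \<in> M" unfolding M_def by (simp add: Zlin)
  next
    fix a x assume "x \<in> M" then show "scaleC a x \<in> M" unfolding M_def by (simp add: Zlin)
  next
    fix s v assume h: "(\<forall>k. s k \<in> M) \<and> (\<lambda>k. cnorm cinner (s k - v)) \<longlonglongrightarrow> 0"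
    have conv: "(\<lambda>k. nn (s k - v)) \<longlonglongrightarrow> 0"
    proof -
      have "(\<lambda>k. (cnorm cinner (s k - v))^2) \<longlonglongrightarrow> 0^2" using h by (intro tendsto_intros) auto
      moreover have "(cnorm cinner (s k - v))^2 = nn (s k - v)" for k
        by (simp add: cnorm_nn nn_nonneg)
      ultimately show ?thesis by simp
    qed
    have b: "nn (X n v) \<le> nn (s k - v)" for k
    proof -
      have "X n v = X n (v - s k)" using h unfolding M_def by (simp add: Zlin)
      then show ?thesis using Z_le[of "v - s k"] nn_commute[of v] by simp
    qed
    have "nn (X n v) \<le> 0" by (rule LIMSEQ_le_const[OF conv]) (use b in blast)
    then show "v \<in> M" unfolding M_def using nn_nonneg[of "X n v"] nn_eq_0 by (simp add: order_antisym)
  qed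
  have inv: "\<forall>i\<in>{1..n}. \<forall>v\<in>M. X i v \<in> M \<and> Xs i v \<in> M \<and> Y i v \<in> M \<and> Ys i v \<in> M"
    unfolding M_def using ker_X ker_Xs ker_Y ker_Ys by auto
  have "M = {0} \<or> M = UNIV" using irr cs inv unfolding irreducible_rep_def by blast
  moreover have "M \<noteq> UNIV" using nz unfolding M_def by auto
  ultimately have M0: "M = {0}" by blast
  show ?thesis
  proof (rule injI)
    fix x y assume "X n x = X n y"
    then have "x - y \<in> M" unfolding M_def by (simp add: Zlin)
    then show "x = y" using M0 by simp
  qed
qed

end

theorem lemma1p6:
  fixes scaleC :: "complex \<Rightarrow> 'h::ab_group_add \<Rightarrow> 'h"
    and cinner :: "'h \<Rightarrow> 'h \<Rightarrow> complex"
    and n :: nat and q :: real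
    and X Xs Y Ys :: "nat \<Rightarrow> 'h \<Rightarrow> 'h"
  assumes "complex_hilbert scaleC cinner"
    and "0 < q" and "q < 1" and "1 \<le> n"
    and "sigma_rep scaleC cinner n q X Xs Y Ys"
    and "irreducible_rep scaleC cinner n X Xs Y Ys"
    and "X n \<noteq> (\<lambda>v. 0)"
  shows "inj (X n) \<and> (\<exists>\<xi>. \<xi> \<noteq> 0 \<and> (\<forall>i\<in>{1..n}. Y i \<xi> = 0))"
proof -
  interpret sig scaleC cinner n q X Xs Y Ys
    using assms by (simp add: sig_def sig_axioms_def)
  show ?thesis using main_inj[OF assms(6)] main_exists by blast
qed

end
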